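(* Let $G$ be a finite group of order $n$ with $n\not\equiv 1 \pmod 3$. Then the number of transversals of the Cayley table of $G$ is divisible by $3$.
   Context: The Cayley table of a finite group $G$ is the latin square with rows and columns indexed by the elements of $G$ whose entry in row $x$, column $y$ is $xy$. A transversal of a latin square of order $n$ is a set of $n$ cells, one from each row and one from each column, no two containing the same symbol. *)

theory Defs
  imports "HOL-Algebra.Group"
begin

definition cayley_transversal :: "('a, 'b) monoid_scheme \<Rightarrow> ('a \<times> 'a) set \<Rightarrow> bool" where
  "cayley_transversal G T \<longleftrightarrow>
     T \<subseteq> carrier G \<times> carrier G \<and>
     (\<forall>x\<in>carrier G. \<exists>!y. (x, y) \<in> T) \<and>
     (\<forall>y\<in>carrier G. \<exists>!x. (x, y) \<in> T) \<and>
     inj_on (\<lambda>(x, y). x \<otimes>\<^bsub>G\<^esub> y) T"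

definition num_transversals :: "('a, 'b) monoid_scheme \<Rightarrow> nat" where
  "num_transversals G = card {T. cayley_transversal G T}"

end

theory Submission
  imports Defs "HOL-Algebra.Multiplicative_Group"
begin

lemma order3_free_dvd:
  assumes "finite S" "f ` S \<subseteq> S" "\<And>x. x \<in> S \<Longrightarrow> f (f (f x)) = x"
    "\<And>x. x \<in> S \<Longrightarrow> f x \<noteq> x"
  shows "3 dvd card S"
  using assms
proof (induction "card S" arbitrary: S rule: less_induct)
  case less
  show ?case
  proof (cases "S = {}")
    case True then show ?thesis by simp
  next
    case False
    then obtain x where x: "x \<in> S" by blast
    have fx: "f x \<in> S" and ffx: "f (f x) \<in> S" using x less.prems(2) by auto
    have d1: "f x \<noteq> x" using less.prems(4) x by blast
    have d2: "f (f x) \<noteq> f x" using less.prems(4) fx by blast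
    have d3: "f (f x) \<noteq> x"
    proof
      assume "f (f x) = x"
      then have "f (f (f x)) = f x" by simp
      then show False using less.prems(3)[OF x] d1 by simp
    qed
    define S' where "S' = S - {x, f x, f (f x)}"
    have cardS: "card S = card S' + 3"
    proof -
      have "{x, f x, f (f x)} \<subseteq> S" using x fx ffx by auto
      moreover have "card {x, f x, f (f x)} = 3" using d1 d2 d3 by auto
      ultimately show ?thesis unfolding S'_def using less.prems(1)
        by (metis card_Diff_subset card_mono finite_subset le_add_diff_inverse2)
    qed
    have "f ` S' \<subseteq> S'"
    proof
      fix z assume "z \<in> f ` S'"
      then obtain y where y: "y \<in> S'" "z = f y" by blast
      have yS: "y \<in> S" using y S'_def by auto
      have "f y \<in> S" using yS less.prems(2) by auto
      moreover have "f y \<noteq> x" using less.prems(3)[OF yS] y S'_def by auto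
      moreover have "f y \<noteq> f x"
      proof
        assume "f y = f x"
        then have "f (f (f y)) = f (f (f x))" by simp
        then show False using less.prems(3)[OF yS] less.prems(3)[OF x] y S'_def by auto
      qed
      moreover have "f y \<noteq> f (f x)"
      proof
        assume "f y = f (f x)"
        then have "f (f (f y)) = f (f (f (f x)))" by simp
        then show False using less.prems(3)[OF yS] less.prems(3)[OF x] y S'_def by auto
      qed
      ultimately show "z \<in> S'" using y S'_def by auto
    qed
    moreover have "finite S'" using less.prems(1) S'_def by auto
    moreover have "card S' < card S" using cardS by simp
    ultimately have "3 dvd card S'"
      by (intro less.hyps[of S']) (auto simp: S'_def less.prems(3,4))
    then show ?thesis using cardS by simp
  qed
qed

lemma img3: assumes "\<forall>p\<in>T. f (f (f p)) = p" shows "f ` f ` f ` T = T"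
proof -
  have "f ` f ` f ` T = (\<lambda>p. f (f (f p))) ` T" by (simp add: image_image)
  also have "\<dots> = id ` T" using assms by (intro image_cong) auto
  finally show ?thesis by simp
qed

lemma img2: assumes "\<forall>p\<in>T. f (g p) = h p" shows "f ` g ` T = h ` T"
proof -
  have "f ` g ` T = (\<lambda>p. f (g p)) ` T" by (simp add: image_image)
  also have "\<dots> = h ` T" using assms by (intro image_cong) auto
  finally show ?thesis .
qed

lemma img1: assumes "\<forall>p\<in>T. f p = p" shows "f ` T = T"
proof -
  have "f ` T = id ` T" using assms by (intro image_cong) auto
  then show ?thesis by simp
qed

context group
begin

lemma tr_sub: "cayley_transversal G T \<Longrightarrow> T \<subseteq> carrier G \<times> carrier G"
  by (simp add: cayley_transversal_def)

lemma tr_row: "cayley_transversal G T \<Longrightarrow> x \<in> carrier G \<Longrightarrow> \<exists>!y. (x, y) \<in> T"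
  by (simp add: cayley_transversal_def)

lemma tr_col: "cayley_transversal G T \<Longrightarrow> y \<in> carrier G \<Longrightarrow> \<exists>!x. (x, y) \<in> T"
  by (simp add: cayley_transversal_def)

lemma tr_inj: "cayley_transversal G T \<Longrightarrow> (x, y) \<in> T \<Longrightarrow> (x', y') \<in> T
   \<Longrightarrow> x \<otimes> y = x' \<otimes> y' \<Longrightarrow> x = x' \<and> y = y'"
proof -
  assume T: "cayley_transversal G T" and a: "(x, y) \<in> T" "(x', y') \<in> T" "x \<otimes> y = x' \<otimes> y'"
  have "inj_on (\<lambda>(x, y). x \<otimes> y) T" using T by (simp add: cayley_transversal_def)
  then have "(x, y) = (x', y')" by (rule inj_onD) (use a in auto)
  then show ?thesis by simp
qed

lemma tr_card:
  assumes T: "cayley_transversal G T" and fin: "finite (carrier G)"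
  shows "card T = card (carrier G)"
proof -
  have "inj_on fst T"
  proof (rule inj_onI)
    fix p q assume pq: "p \<in> T" "q \<in> T" "fst p = fst q"
    obtain a b c where p: "p = (a, b)" and q: "q = (a, c)"
      using pq(3) by (cases p, cases q) auto
    have a: "a \<in> carrier G" using tr_sub[OF T] pq(1) p by auto
    have "b = c" using tr_row[OF T a] pq(1,2) p q by auto
    then show "p = q" using p q by simp
  qed
  moreover have "fst ` T = carrier G"
  proof
    show "fst ` T \<subseteq> carrier G" using tr_sub[OF T] by auto
    show "carrier G \<subseteq> fst ` T"
    proof
      fix a assume a: "a \<in> carrier G"
      then obtain b where "(a, b) \<in> T" using tr_row[OF T a] by auto
      then show "a \<in> fst ` T" by force
    qed
  qed
  ultimately show ?thesis by (metis card_image)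
qed

lemma tr_symbols:
  assumes T: "cayley_transversal G T" and fin: "finite (carrier G)"
  shows "(\<lambda>(x, y). x \<otimes> y) ` T = carrier G"
proof -
  have "inj_on (\<lambda>(x, y). x \<otimes> y) T" using T by (simp add: cayley_transversal_def)
  then have "card ((\<lambda>(x, y). x \<otimes> y) ` T) = card (carrier G)"
    using tr_card[OF T fin] by (simp add: card_image)
  moreover have "(\<lambda>(x, y). x \<otimes> y) ` T \<subseteq> carrier G" using tr_sub[OF T] by auto
  ultimately show ?thesis using fin by (metis card_subset_eq)
qed

lemma sym_g: "x \<in> carrier G \<Longrightarrow> y \<in> carrier G \<Longrightarrow> y \<otimes> inv (x \<otimes> y) = inv x"
  by (simp add: inv_mult_group m_assoc[symmetric])

lemma phi_tr:
  assumes T: "cayley_transversal G T" and fin: "finite (carrier G)"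
  shows "cayley_transversal G ((\<lambda>(x, y). (y, inv (x \<otimes> y))) ` T)"
    (is "cayley_transversal G ?U")
proof -
  have sub: "T \<subseteq> carrier G \<times> carrier G" by (rule tr_sub[OF T])
  have 1: "?U \<subseteq> carrier G \<times> carrier G" using sub by auto
  have 2: "\<exists>!c. (r, c) \<in> ?U" if r: "r \<in> carrier G" for r
  proof -
    obtain x where x: "(x, r) \<in> T" using tr_col[OF T r] by auto
    show ?thesis
    proof (rule ex1I[of _ "inv (x \<otimes> r)"])
      show "(r, inv (x \<otimes> r)) \<in> ?U" using x by force
    next
      fix c assume "(r, c) \<in> ?U"
      then obtain x' where x': "(x', r) \<in> T" "c = inv (x' \<otimes> r)" by auto
      have "x' = x" using tr_col[OF T r] x x'(1) by auto
      then show "c = inv (x \<otimes> r)" using x' by simp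
    qed
  qed
  have 3: "\<exists>!r. (r, c) \<in> ?U" if c: "c \<in> carrier G" for c
  proof -
    have "inv c \<in> (\<lambda>(x, y). x \<otimes> y) ` T" using tr_symbols[OF T fin] c by simp
    then obtain x y where xy: "(x, y) \<in> T" "x \<otimes> y = inv c" by auto
    show ?thesis
    proof (rule ex1I[of _ y])
      have "inv (x \<otimes> y) = c" using xy c by simp
      then show "(y, c) \<in> ?U" using xy(1) by force
    next
      fix r assume "(r, c) \<in> ?U"
      then obtain x' where x': "(x', r) \<in> T" "c = inv (x' \<otimes> r)" by auto
      have "x' \<otimes> r = inv c" using x' sub by auto
      then show "r = y" using tr_inj[OF T x'(1) xy(1)] xy(2) by auto
    qed
  qed
  have 4: "inj_on (\<lambda>(x, y). x \<otimes> y) ?U"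
  proof (rule inj_onI)
    fix p q assume "p \<in> ?U" "q \<in> ?U" and e: "(\<lambda>(x, y). x \<otimes> y) p = (\<lambda>(x, y). x \<otimes> y) q"
    then obtain x y x' y' where p: "p = (y, inv (x \<otimes> y))" "(x, y) \<in> T"
      and q: "q = (y', inv (x' \<otimes> y'))" "(x', y') \<in> T" by auto
    have c: "x \<in> carrier G" "y \<in> carrier G" "x' \<in> carrier G" "y' \<in> carrier G"
      using p(2) q(2) sub by auto
    have "inv x = inv x'" using e p q sym_g c by simp
    then have xx: "x = x'" using c by (metis inv_inv)
    then have "y = y'" using tr_row[OF T c(1)] p(2) q(2) by auto
    then show "p = q" using p q xx by simp
  qed
  show ?thesis unfolding cayley_transversal_def
    by (intro conjI ballI; (rule 1 | rule 4 | erule 2 | erule 3))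
qed

lemma g3: "x \<in> carrier G \<Longrightarrow> y \<in> carrier G \<Longrightarrow>
  (\<lambda>(x, y). (y, inv (x \<otimes> y))) ((\<lambda>(x, y). (y, inv (x \<otimes> y)))
     ((\<lambda>(x, y). (y, inv (x \<otimes> y))) (x, y))) = (x, y)"
proof -
  assume c: "x \<in> carrier G" "y \<in> carrier G"
  have a: "inv (y \<otimes> inv (x \<otimes> y)) = x" using c sym_g by simp
  have b: "inv (inv (x \<otimes> y) \<otimes> x) = y" using c
    by (simp add: inv_mult_group m_assoc)
  show ?thesis using a b by simp
qed

lemma phi3:
  assumes "T \<subseteq> carrier G \<times> carrier G"
  shows "(\<lambda>(x, y). (y, inv (x \<otimes> y))) ` (\<lambda>(x, y). (y, inv (x \<otimes> y))) `
     (\<lambda>(x, y). (y, inv (x \<otimes> y))) ` T = T"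
proof -
  have "\<And>p. p \<in> T \<Longrightarrow> (\<lambda>(x, y). (y, inv (x \<otimes> y))) ((\<lambda>(x, y). (y, inv (x \<otimes> y)))
     ((\<lambda>(x, y). (y, inv (x \<otimes> y))) p)) = p"
  proof -
    fix p assume "p \<in> T"
    then obtain x y where p: "p = (x, y)" and xy: "x \<in> carrier G" "y \<in> carrier G" using assms by auto
    show "?thesis p" unfolding p by (rule g3[OF xy])
  qed
  then show ?thesis by (intro img3) blast
qed

lemma psi_tr:
  assumes T: "cayley_transversal G T" and a: "a \<in> carrier G"
  shows "cayley_transversal G ((\<lambda>(x, y). (x, y \<otimes> a)) ` T)"
    (is "cayley_transversal G ?U")
proof -
  have sub: "T \<subseteq> carrier G \<times> carrier G" by (rule tr_sub[OF T])
  have 1: "?U \<subseteq> carrier G \<times> carrier G" using sub a by auto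
  have 2: "\<exists>!c. (r, c) \<in> ?U" if r: "r \<in> carrier G" for r
  proof -
    obtain y where y: "(r, y) \<in> T" using tr_row[OF T r] by auto
    show ?thesis
    proof (rule ex1I[of _ "y \<otimes> a"])
      show "(r, y \<otimes> a) \<in> ?U" using y by force
    next
      fix c assume "(r, c) \<in> ?U"
      then obtain y' where y': "(r, y') \<in> T" "c = y' \<otimes> a" by auto
      have "y' = y" using tr_row[OF T r] y y'(1) by auto
      then show "c = y \<otimes> a" using y' by simp
    qed
  qed
  have 3: "\<exists>!r. (r, c) \<in> ?U" if c: "c \<in> carrier G" for c
  proof -
    have ca: "c \<otimes> inv a \<in> carrier G" using c a by simp
    obtain x where x: "(x, c \<otimes> inv a) \<in> T" using tr_col[OF T ca] by auto
    show ?thesis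
    proof (rule ex1I[of _ x])
      have "c \<otimes> inv a \<otimes> a = c" using c a by (simp add: m_assoc)
      then show "(x, c) \<in> ?U" using x by force
    next
      fix r assume "(r, c) \<in> ?U"
      then obtain y' where y': "(r, y') \<in> T" "c = y' \<otimes> a" by auto
      have "y' \<in> carrier G" using y'(1) sub by auto
      then have "y' = c \<otimes> inv a" using y'(2) a by (simp add: m_assoc)
      then show "r = x" using tr_col[OF T ca] x y'(1) by auto
    qed
  qed
  have 4: "inj_on (\<lambda>(x, y). x \<otimes> y) ?U"
  proof (rule inj_onI)
    fix p q assume "p \<in> ?U" "q \<in> ?U" and e: "(\<lambda>(x, y). x \<otimes> y) p = (\<lambda>(x, y). x \<otimes> y) q"
    then obtain x y x' y' where p: "p = (x, y \<otimes> a)" "(x, y) \<in> T"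
      and q: "q = (x', y' \<otimes> a)" "(x', y') \<in> T" by auto
    have c: "x \<in> carrier G" "y \<in> carrier G" "x' \<in> carrier G" "y' \<in> carrier G"
      using p(2) q(2) sub by auto
    have "(x \<otimes> y) \<otimes> a = (x' \<otimes> y') \<otimes> a" using e p q c a by (simp add: m_assoc)
    then have "x \<otimes> y = x' \<otimes> y'" using c a by simp
    then have "x = x' \<and> y = y'" using tr_inj[OF T p(2) q(2)] by simp
    then show "p = q" using p q by simp
  qed
  show ?thesis unfolding cayley_transversal_def
    by (intro conjI ballI; (rule 1 | rule 4 | erule 2 | erule 3))
qed

lemma psi_comp:
  assumes "T \<subseteq> carrier G \<times> carrier G" "a \<in> carrier G" "b \<in> carrier G"
  shows "(\<lambda>(x, y). (x, y \<otimes> b)) ` (\<lambda>(x, y). (x, y \<otimes> a)) ` T = (\<lambda>(x, y). (x, y \<otimes> (a \<otimes> b))) ` T"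
proof -
  have "\<And>p. p \<in> T \<Longrightarrow> (\<lambda>(x, y). (x, y \<otimes> b)) ((\<lambda>(x, y). (x, y \<otimes> a)) p) = (\<lambda>(x, y). (x, y \<otimes> (a \<otimes> b))) p"
  proof -
    fix p assume "p \<in> T"
    then obtain x y where "p = (x, y)" "x \<in> carrier G" "y \<in> carrier G" using assms by auto
    then show "?thesis p" using assms by (simp add: m_assoc)
  qed
  then show ?thesis by (intro img2) blast
qed

lemma psi_one:
  assumes "T \<subseteq> carrier G \<times> carrier G"
  shows "(\<lambda>(x, y). (x, y \<otimes> \<one>)) ` T = T"
proof -
  have "\<And>p. p \<in> T \<Longrightarrow> (\<lambda>(x, y). (x, y \<otimes> \<one>)) p = p" using assms by auto
  then show ?thesis by (intro img1) blast
qed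

lemma tr_finite: "finite (carrier G) \<Longrightarrow> finite {T. cayley_transversal G T}"
  by (rule finite_subset[of _ "Pow (carrier G \<times> carrier G)"]) (auto dest: tr_sub)

lemma n_dvd:
  assumes fin: "finite (carrier G)"
  shows "card (carrier G) dvd card {T. cayley_transversal G T}"
proof -
  define S where "S y = {T. cayley_transversal G T \<and> (\<one>, y) \<in> T}" for y
  define h where "h a (T :: ('a \<times> 'a) set) = (\<lambda>(x, y). (x, y \<otimes> a)) ` T" for a T
  have U: "{T. cayley_transversal G T} = (\<Union>y\<in>carrier G. S y)"
  proof
    show "{T. cayley_transversal G T} \<subseteq> (\<Union>y\<in>carrier G. S y)"
    proof
      fix T assume "T \<in> {T. cayley_transversal G T}"
      then have T: "cayley_transversal G T" by simp
      obtain y where y: "(\<one>, y) \<in> T" using tr_row[OF T one_closed] by auto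
      have "y \<in> carrier G" using y tr_sub[OF T] by auto
      then show "T \<in> (\<Union>y\<in>carrier G. S y)" using T y unfolding S_def by auto
    qed
  qed (auto simp: S_def)
  have fS: "finite (S y)" for y
    by (rule finite_subset[OF _ tr_finite[OF fin]]) (auto simp: S_def)
  have disj: "\<forall>i\<in>carrier G. \<forall>j\<in>carrier G. i \<noteq> j \<longrightarrow> S i \<inter> S j = {}"
  proof (intro ballI impI)
    fix i j :: 'a assume "i \<noteq> j"
    show "S i \<inter> S j = {}"
    proof (rule ccontr)
      assume "S i \<inter> S j \<noteq> {}"
      then obtain T where T: "cayley_transversal G T" "(\<one>, i) \<in> T" "(\<one>, j) \<in> T"
        unfolding S_def by auto
      have "\<exists>!y. (\<one>, y) \<in> T" by (rule tr_row[OF T(1) one_closed])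
      then have "i = j" using T(2,3) by auto
      then show False using \<open>i \<noteq> j\<close> by simp
    qed
  qed
  have cS: "card (S y) = card (S \<one>)" if y: "y \<in> carrier G" for y
  proof -
    have iy: "inv y \<in> carrier G" using y by simp
    have "bij_betw (h y) (S \<one>) (S y)"
    proof (rule bij_betw_byWitness[where f' = "h (inv y)"])
      show "\<forall>T\<in>S \<one>. h (inv y) (h y T) = T"
      proof
        fix T assume "T \<in> S \<one>"
        then have T: "T \<subseteq> carrier G \<times> carrier G" unfolding S_def by (auto dest: tr_sub)
        show "h (inv y) (h y T) = T" unfolding h_def
          using psi_comp[OF T y iy] psi_one[OF T] y by simp
      qed
      show "\<forall>T\<in>S y. h y (h (inv y) T) = T"
      proof
        fix T assume "T \<in> S y"
        then have T: "T \<subseteq> carrier G \<times> carrier G" unfolding S_def by (auto dest: tr_sub)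
        show "h y (h (inv y) T) = T" unfolding h_def
          using psi_comp[OF T iy y] psi_one[OF T] y by simp
      qed
      show "h y ` S \<one> \<subseteq> S y"
      proof
        fix U assume "U \<in> h y ` S \<one>"
        then obtain T where T: "cayley_transversal G T" "(\<one>, \<one>) \<in> T" "U = h y T"
          unfolding S_def by auto
        have "cayley_transversal G U" using psi_tr[OF T(1) y] T(3) h_def by simp
        moreover have "(\<one>, y) \<in> U"
        proof -
          have "(\<one>, \<one> \<otimes> y) \<in> U" unfolding T(3) h_def by (rule rev_image_eqI[OF T(2)]) simp
          then show ?thesis using y by simp
        qed
        ultimately show "U \<in> S y" unfolding S_def by simp
      qed
      show "h (inv y) ` S y \<subseteq> S \<one>"
      proof
        fix U assume "U \<in> h (inv y) ` S y"
        then obtain T where T: "cayley_transversal G T" "(\<one>, y) \<in> T" "U = h (inv y) T"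
          unfolding S_def by auto
        have "cayley_transversal G U" using psi_tr[OF T(1) iy] T(3) h_def by simp
        moreover have "(\<one>, \<one>) \<in> U"
        proof -
          have "(\<one>, y \<otimes> inv y) \<in> U" unfolding T(3) h_def by (rule rev_image_eqI[OF T(2)]) simp
          then show ?thesis using y by simp
        qed
        ultimately show "U \<in> S \<one>" unfolding S_def by simp
      qed
    qed
    then show ?thesis by (simp add: bij_betw_same_card)
  qed
  have "card {T. cayley_transversal G T} = (\<Sum>y\<in>carrier G. card (S y))"
    unfolding U by (rule card_UN_disjoint[OF fin]) (use fS disj in blast)+
  also have "\<dots> = (\<Sum>y\<in>carrier G. card (S \<one>))" by (rule sum.cong[OF refl]) (rule cS)
  also have "\<dots> = card (carrier G) * card (S \<one>)" by simp
  finally show ?thesis by simp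
qed

lemma cube_one:
  assumes fin: "finite (carrier G)" and n: "card (carrier G) mod 3 = 2"
    and x: "x \<in> carrier G" and e: "x \<otimes> x \<otimes> x = \<one>"
  shows "x = \<one>"
proof -
  have p: "x [^] card (carrier G) = \<one>" using pow_order_eq_1[OF x] by (simp add: order_def)
  have c: "card (carrier G) = 3 * (card (carrier G) div 3) + 2" using n by presburger
  have x3: "x [^] (3::nat) = \<one>" using e x by (simp add: eval_nat_numeral)
  have "x [^] card (carrier G) = x [^] (3 * (card (carrier G) div 3)) \<otimes> x [^] (2::nat)"
    by (subst c) (simp add: nat_pow_mult x)
  also have "x [^] (3 * (card (carrier G) div 3)) = \<one>"
    by (simp add: nat_pow_pow[symmetric] x x3)
  finally have "x [^] (2::nat) = \<one>" using p x by simp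
  then have "x \<otimes> x = \<one>" using x by (simp add: eval_nat_numeral)
  then show ?thesis using e x by simp
qed

lemma phi_nofix:
  assumes T: "cayley_transversal G T" and fin: "finite (carrier G)"
    and n: "card (carrier G) mod 3 = 2"
  shows "(\<lambda>(x, y). (y, inv (x \<otimes> y))) ` T \<noteq> T"
proof
  let ?g = "\<lambda>(x, y). (y, inv (x \<otimes> y))"
  assume fx: "?g ` T = T"
  have sub: "T \<subseteq> carrier G \<times> carrier G" by (rule tr_sub[OF T])
  have finT: "finite T" by (rule finite_subset[OF sub]) (simp add: fin)
  define F where "F = {c \<in> T. ?g c = c}"
  have g3': "?g (?g (?g c)) = c" if cT: "c \<in> T" for c
  proof -
    obtain x y where c: "c = (x, y)" and xy: "x \<in> carrier G" "y \<in> carrier G"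
      using cT sub by auto
    show ?thesis unfolding c by (rule g3[OF xy])
  qed
  have F1: "F \<subseteq> {(\<one>, \<one>)}"
  proof
    fix c assume "c \<in> F"
    then have cT: "c \<in> T" and cg: "?g c = c" unfolding F_def by auto
    obtain x y where c: "c = (x, y)" and xy: "x \<in> carrier G" "y \<in> carrier G"
      using cT sub by auto
    have yx: "y = x" and ix: "inv (x \<otimes> y) = x" using cg c by auto
    have "x \<otimes> x \<otimes> x = (x \<otimes> x) \<otimes> inv (x \<otimes> x)" using ix yx by simp
    also have "\<dots> = \<one>" using xy by simp
    finally have "x = \<one>" using cube_one[OF fin n xy(1)] by simp
    then show "c \<in> {(\<one>, \<one>)}" using c yx by simp
  qed
  have "3 dvd card (T - F)"
  proof (rule order3_free_dvd[where f = ?g])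
    show "finite (T - F)" using finT by simp
    show "?g ` (T - F) \<subseteq> T - F"
    proof
      fix d assume "d \<in> ?g ` (T - F)"
      then obtain c where c: "c \<in> T" "c \<notin> F" "d = ?g c" by auto
      have "d \<in> T" using c fx by blast
      moreover have "d \<notin> F"
      proof
        assume "d \<in> F"
        then have "?g d = d" unfolding F_def by simp
        then have "?g (?g (?g c)) = ?g c" using c(3) by simp
        then have "c = ?g c" using g3'[OF c(1)] by simp
        then show False using c(1,2) unfolding F_def by simp
      qed
      ultimately show "d \<in> T - F" by simp
    qed
    show "\<And>c. c \<in> T - F \<Longrightarrow> ?g (?g (?g c)) = c" using g3' by simp
    show "\<And>c. c \<in> T - F \<Longrightarrow> ?g c \<noteq> c" unfolding F_def by simp
  qed
  moreover have "card F \<le> 1" using card_mono[OF _ F1] by simp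
  moreover have "card (T - F) = card (carrier G) - card F"
    using card_Diff_subset[of F T] finT tr_card[OF T fin] F_def
    by (metis (no_types, lifting) finite_subset mem_Collect_eq subsetI)
  ultimately show False using n by presburger
qed

end

theorem theorem4p7:
  fixes G :: "('a, 'b) monoid_scheme"
  assumes "group G" and "finite (carrier G)"
    and "card (carrier G) mod 3 \<noteq> 1"
  shows "3 dvd num_transversals G"
proof -
  interpret group G by (rule assms(1))
  have fin: "finite (carrier G)" by (rule assms(2))
  show ?thesis
  proof (cases "card (carrier G) mod 3 = 0")
    case True
    then have "3 dvd card (carrier G)" by presburger
    then show ?thesis unfolding num_transversals_def using n_dvd[OF fin] by (rule dvd_trans)
  next
    case False
    then have n: "card (carrier G) mod 3 = 2" using assms(3) by presburger
    let ?g = "\<lambda>(x, y). (y, inv\<^bsub>G\<^esub> (x \<otimes>\<^bsub>G\<^esub> y))"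
    have "3 dvd card {T. cayley_transversal G T}"
    proof (rule order3_free_dvd[where f = "\<lambda>T. ?g ` T"])
      show "finite {T. cayley_transversal G T}" by (rule tr_finite[OF fin])
      show "(\<lambda>T. ?g ` T) ` {T. cayley_transversal G T} \<subseteq> {T. cayley_transversal G T}"
      proof
        fix U assume "U \<in> (\<lambda>T. ?g ` T) ` {T. cayley_transversal G T}"
        then obtain T where T: "cayley_transversal G T" and U: "U = ?g ` T" by auto
        show "U \<in> {T. cayley_transversal G T}" using phi_tr[OF T fin] U by simp
      qed
      show "\<And>T. T \<in> {T. cayley_transversal G T} \<Longrightarrow> ?g ` ?g ` ?g ` T = T"
        by (rule phi3[OF tr_sub]) simp
      show "\<And>T. T \<in> {T. cayley_transversal G T} \<Longrightarrow> ?g ` T \<noteq> T"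
        by (rule phi_nofix[OF _ fin n]) simp
    qed
    then show ?thesis unfolding num_transversals_def .
  qed
qed

end
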